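(* Let $\Lambda$ be a row-finite $k$-graph with no sources. Suppose that we have a $\Lambda$-projective system on a measure space $(X, \mu)$ with coding maps $\{\tau^n\}_{n\in\mathbb{N}^k}$, and let $\{T_\lambda:\lambda\in\Lambda\}$ be the associated representation of $C^*(\Lambda)$ on $L^2(X, \mu)$. If the representation $\{T_\lambda:\lambda\in\Lambda\}$ is irreducible, then the coding maps $\{\tau^n\}_{n\in\mathbb{N}^k}$ are jointly ergodic with respect to $\mu$.
   Context: A $k$-graph is a countable small category $\Lambda$ with a functor $d:\Lambda\to\mathbb{N}^k$ with unique factorization ($d(\lambda)=m+n$ implies unique $\lambda=\mu\nu$, $d(\mu)=m$, $d(\nu)=n$); vertices $\Lambda^0$ are identity morphisms, $r,s$ range/source, $v\Lambda^n=\{\lambda: r(\lambda)=v, d(\lambda)=n\}$. Row-finite: $v\Lambda^n$ finite; no sources: $v\Lambda^n\ne\emptyset$. $C^*(\Lambda)$: universal $C^*$-algebra generated by partial isometries $s_\lambda$ with $\{s_v\}$ mutually orthogonal projections, $s_\lambda s_\eta=s_{\lambda\eta}$ when $s(\lambda)=r(\eta)$, $s_\lambda^*s_\lambda=s_{s(\lambda)}$, $s_v=\sum_{\lambda\in v\Lambda^n}s_\lambda s_\lambda^*$. A semibranching function system on $(X,\mu)$: measurable $D_i$ ($0<\mu(D_i)<\infty$), measurable $\sigma_i:D_i\to X$ with $R_i=\sigma_i(D_i)$ satisfying $\mu(X\setminus\bigcup R_i)=0$, $\mu(R_i\cap R_j)=0$ for $i\neq j$, $\mu(R_i)<\infty$,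 and $d(\mu\circ\sigma_i)/d\mu>0$ a.e. on $D_i$; coding map $\sigma$ with $\sigma\circ\sigma_i=\mathrm{id}_{D_i}$. A $\Lambda$-semibranching function system: sets $D_\lambda$, maps $\tau_\lambda: D_\lambda\to X$, $\tau^m:X\to X$, such that $\{\tau_\lambda:d(\lambda)=m\}$ is a semibranching function system with coding map $\tau^m$ for each $m$; $\tau_v=\mathrm{id}$; $R_\lambda=\tau_\lambda(D_\lambda)$, $R_\nu\subseteq D_\lambda$ a.e. and $\tau_\lambda\tau_\nu=\tau_{\lambda\nu}$ a.e. for $\nu\in s(\lambda)\Lambda$; $\tau^m\tau^n=\tau^{m+n}$. A $\Lambda$-projective system adds functions $f_\lambda\in L^2(X,\mu)$ with $0\ne d(\mu\circ\tau_\lambda^{-1})/d\mu=|f_\lambda|^2$ and $f_\lambda(f_\nu\circ\tau^{d(\lambda)})=f_{\lambda\nu}$; the associated representation is $T_\lambda f=f_\lambda\cdot(f\circ\tau^{d(\lambda)})$. A family of maps $\{T_i\}$ on $X$ is jointly ergodic with respect to $\mu$ if whenever $A$ is measurable with $\mu(A\,\Delta\, T_i^{-1}(A))=0$ for all $i$, then $\mu(A)=0$ or $\mu(X\setminus A)=0$. *)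

theory Defs
  imports "HOL-Analysis.Analysis"
begin

text \<open>Elements of N^k are represented as functions nat => nat vanishing outside {..<k}.\<close>
definition Nk :: "nat \<Rightarrow> (nat \<Rightarrow> nat) set" where
  "Nk k = {n. \<forall>i\<ge>k. n i = 0}"

definition nk_add :: "(nat \<Rightarrow> nat) \<Rightarrow> (nat \<Rightarrow> nat) \<Rightarrow> (nat \<Rightarrow> nat)" where
  "nk_add m n = (\<lambda>i. m i + n i)"

text \<open>A k-graph: a countable small category with morphism set L, range and source maps r, s
  (objects are identified with identity morphisms), partial composition c (c l m defined
  when s l = r m), and a degree functor d into N^k with unique factorisation.\<close>
definition kgraph :: "nat \<Rightarrow> 'a set \<Rightarrow> ('a \<Rightarrow> 'a) \<Rightarrow> ('a \<Rightarrow> 'a) \<Rightarrow> ('a \<Rightarrow> 'a \<Rightarrow> 'a)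
    \<Rightarrow> ('a \<Rightarrow> nat \<Rightarrow> nat) \<Rightarrow> bool" where
  "kgraph k L r s c d \<longleftrightarrow>
     countable L \<and>
     (\<forall>l\<in>L. r l \<in> L \<and> s l \<in> L \<and> d l \<in> Nk k) \<and>
     (\<forall>l\<in>L. r (r l) = r l \<and> s (r l) = r l \<and> r (s l) = s l \<and> s (s l) = s l) \<and>
     (\<forall>l\<in>L. c (r l) l = l \<and> c l (s l) = l) \<and>
     (\<forall>l\<in>L. \<forall>m\<in>L. s l = r m \<longrightarrow>
         c l m \<in> L \<and> r (c l m) = r l \<and> s (c l m) = s m \<and> d (c l m) = nk_add (d l) (d m)) \<and>
     (\<forall>l\<in>L. \<forall>m\<in>L. \<forall>n\<in>L. s l = r m \<longrightarrow> s m = r n \<longrightarrow> c (c l m) n = c l (c m n)) \<and>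
     (\<forall>l\<in>L. \<forall>m\<in>Nk k. \<forall>n\<in>Nk k. d l = nk_add m n \<longrightarrow>
         (\<exists>!p. fst p \<in> L \<and> snd p \<in> L \<and> s (fst p) = r (snd p) \<and>
               d (fst p) = m \<and> d (snd p) = n \<and> c (fst p) (snd p) = l))"

definition kvertices :: "'a set \<Rightarrow> ('a \<Rightarrow> 'a) \<Rightarrow> 'a set" where
  "kvertices L r = r ` L"

definition row_finite :: "nat \<Rightarrow> 'a set \<Rightarrow> ('a \<Rightarrow> 'a) \<Rightarrow> ('a \<Rightarrow> nat \<Rightarrow> nat) \<Rightarrow> bool" where
  "row_finite k L r d \<longleftrightarrow>
     (\<forall>v\<in>kvertices L r. \<forall>n\<in>Nk k. finite {l\<in>L. r l = v \<and> d l = n})"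

definition no_sources :: "nat \<Rightarrow> 'a set \<Rightarrow> ('a \<Rightarrow> 'a) \<Rightarrow> ('a \<Rightarrow> nat \<Rightarrow> nat) \<Rightarrow> bool" where
  "no_sources k L r d \<longleftrightarrow>
     (\<forall>v\<in>kvertices L r. \<forall>n\<in>Nk k. {l\<in>L. r l = v \<and> d l = n} \<noteq> {})"

text \<open>The Radon--Nikodym derivative of
  mu o sig i with respect to mu on D i is given by rho.\<close>
definition sbfs :: "'x measure \<Rightarrow> 'i set \<Rightarrow> ('i \<Rightarrow> 'x set) \<Rightarrow> ('i \<Rightarrow> 'x \<Rightarrow> 'x)
    \<Rightarrow> ('x \<Rightarrow> 'x) \<Rightarrow> bool" where
  "sbfs M I D sig cod \<longleftrightarrow>
     (\<forall>i\<in>I.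
        D i \<in> sets M \<and> 0 < emeasure M (D i) \<and> emeasure M (D i) < \<infinity> \<and>
        (\<forall>x\<in>D i. sig i x \<in> space M) \<and>
        (\<forall>A\<in>sets M. {x\<in>D i. sig i x \<in> A} \<in> sets M) \<and>
        sig i ` D i \<in> sets M \<and> emeasure M (sig i ` D i) < \<infinity> \<and>
        (\<exists>rho\<in>borel_measurable M.
           (\<forall>A\<in>sets M. A \<subseteq> D i \<longrightarrow>
              sig i ` A \<in> sets M \<and> emeasure M (sig i ` A) = set_nn_integral M A rho) \<and>
           (AE x in M. x \<in> D i \<longrightarrow> 0 < rho x)) \<and>
        (\<forall>x\<in>D i. cod (sig i x) = x)) \<and>
     emeasure M (space M - (\<Union>i\<in>I. sig i ` D i)) = 0 \<and>
     (\<forall>i\<in>I. \<forall>j\<in>I. i \<noteq> j \<longrightarrow> emeasure M (sig i ` D i \<inter> sig j ` D j) = 0) \<and>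
     cod \<in> measurable M M"

definition lambda_sbfs :: "nat \<Rightarrow> 'a set \<Rightarrow> ('a \<Rightarrow> 'a) \<Rightarrow> ('a \<Rightarrow> 'a) \<Rightarrow> ('a \<Rightarrow> 'a \<Rightarrow> 'a)
    \<Rightarrow> ('a \<Rightarrow> nat \<Rightarrow> nat) \<Rightarrow> 'x measure \<Rightarrow> ('a \<Rightarrow> 'x set) \<Rightarrow> ('a \<Rightarrow> 'x \<Rightarrow> 'x)
    \<Rightarrow> ((nat \<Rightarrow> nat) \<Rightarrow> 'x \<Rightarrow> 'x) \<Rightarrow> bool" where
  "lambda_sbfs k L r s c d M D tau tauc \<longleftrightarrow>
     (\<forall>m\<in>Nk k. sbfs M {l\<in>L. d l = m} D tau (tauc m)) \<and>
     (\<forall>v\<in>kvertices L r. \<forall>x\<in>D v. tau v x = x) \<and>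
     (\<forall>l\<in>L. \<forall>n\<in>L. r n = s l \<longrightarrow>
        emeasure M (tau n ` D n - D l) = 0 \<and>
        (AE x in M. ((x \<in> D n \<and> tau n x \<in> D l) \<longleftrightarrow> x \<in> D (c l n)) \<and>
                    (x \<in> D (c l n) \<longrightarrow> tau l (tau n x) = tau (c l n) x))) \<and>
     (\<forall>m\<in>Nk k. \<forall>n\<in>Nk k. \<forall>x\<in>space M. tauc m (tauc n x) = tauc (nk_add m n) x)"

definition L2 :: "'x measure \<Rightarrow> ('x \<Rightarrow> complex) set" where
  "L2 M = {g. g \<in> borel_measurable M \<and> integrable M (\<lambda>x. (cmod (g x))\<^sup>2)}"

definition l2_inner :: "'x measure \<Rightarrow> ('x \<Rightarrow> complex) \<Rightarrow> ('x \<Rightarrow> complex) \<Rightarrow> complex" where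
  "l2_inner M g h = (LINT x|M. g x * cnj (h x))"

definition l2_norm :: "'x measure \<Rightarrow> ('x \<Rightarrow> complex) \<Rightarrow> real" where
  "l2_norm M g = sqrt (LINT x|M. (cmod (g x))\<^sup>2)"

definition lambda_projective_system :: "nat \<Rightarrow> 'a set \<Rightarrow> ('a \<Rightarrow> 'a) \<Rightarrow> ('a \<Rightarrow> 'a)
    \<Rightarrow> ('a \<Rightarrow> 'a \<Rightarrow> 'a) \<Rightarrow> ('a \<Rightarrow> nat \<Rightarrow> nat) \<Rightarrow> 'x measure \<Rightarrow> ('a \<Rightarrow> 'x set)
    \<Rightarrow> ('a \<Rightarrow> 'x \<Rightarrow> 'x) \<Rightarrow> ((nat \<Rightarrow> nat) \<Rightarrow> 'x \<Rightarrow> 'x) \<Rightarrow> ('a \<Rightarrow> 'x \<Rightarrow> complex) \<Rightarrow> bool" where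
  "lambda_projective_system k L r s c d M D tau tauc f \<longleftrightarrow>
     lambda_sbfs k L r s c d M D tau tauc \<and>
     (\<forall>l\<in>L. f l \<in> L2 M \<and> \<not> (AE x in M. f l x = 0) \<and>
        (\<forall>A\<in>sets M. emeasure M {x\<in>D l. tau l x \<in> A}
                      = (\<integral>\<^sup>+x\<in>A. ennreal ((cmod (f l x))\<^sup>2) \<partial>M))) \<and>
     (\<forall>l\<in>L. \<forall>n\<in>L. r n = s l \<longrightarrow>
        (AE x in M. f l x * f n (tauc (d l) x) = f (c l n) x))"

definition kg_rep :: "('a \<Rightarrow> 'x \<Rightarrow> complex) \<Rightarrow> ((nat \<Rightarrow> nat) \<Rightarrow> 'x \<Rightarrow> 'x) \<Rightarrow> ('a \<Rightarrow> nat \<Rightarrow> nat)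
    \<Rightarrow> 'a \<Rightarrow> ('x \<Rightarrow> complex) \<Rightarrow> ('x \<Rightarrow> complex)" where
  "kg_rep f tauc d l g = (\<lambda>x. f l x * g (tauc (d l) x))"

definition l2_closed_subspace :: "'x measure \<Rightarrow> ('x \<Rightarrow> complex) set \<Rightarrow> bool" where
  "l2_closed_subspace M V \<longleftrightarrow>
     V \<subseteq> L2 M \<and> (\<lambda>x. 0) \<in> V \<and>
     (\<forall>g\<in>V. \<forall>h\<in>V. (\<lambda>x. g x + h x) \<in> V) \<and>
     (\<forall>a. \<forall>g\<in>V. (\<lambda>x. a * g x) \<in> V) \<and>
     (\<forall>gs g. (\<forall>n. gs n \<in> V) \<and> g \<in> L2 M \<and>
        (\<lambda>n. l2_norm M (\<lambda>x. gs n x - g x)) \<longlonglongrightarrow> 0 \<longrightarrow> g \<in> V)"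

text \<open>V is invariant under T_l and under the adjoint T_l^* (the adjoint image of g \<in> V lies in V).\<close>
definition rep_invariant :: "'x measure \<Rightarrow> 'a set \<Rightarrow> ('a \<Rightarrow> ('x \<Rightarrow> complex) \<Rightarrow> ('x \<Rightarrow> complex))
    \<Rightarrow> ('x \<Rightarrow> complex) set \<Rightarrow> bool" where
  "rep_invariant M L T V \<longleftrightarrow>
     (\<forall>l\<in>L. \<forall>g\<in>V. T l g \<in> V) \<and>
     (\<forall>l\<in>L. \<forall>g\<in>V. \<exists>h\<in>V. \<forall>u\<in>L2 M. l2_inner M (T l u) g = l2_inner M u h)"

definition irreducible_rep :: "'x measure \<Rightarrow> 'a set \<Rightarrow> ('a \<Rightarrow> ('x \<Rightarrow> complex) \<Rightarrow> ('x \<Rightarrow> complex))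
    \<Rightarrow> bool" where
  "irreducible_rep M L T \<longleftrightarrow>
     (\<forall>V. l2_closed_subspace M V \<and> rep_invariant M L T V \<longrightarrow>
        (\<forall>g\<in>V. AE x in M. g x = 0) \<or> L2 M \<subseteq> V)"

definition jointly_ergodic :: "'x measure \<Rightarrow> 'j set \<Rightarrow> ('j \<Rightarrow> 'x \<Rightarrow> 'x) \<Rightarrow> bool" where
  "jointly_ergodic M J T \<longleftrightarrow>
     (\<forall>A\<in>sets M. (\<forall>j\<in>J. emeasure M ((A - (T j -` A \<inter> space M)) \<union> ((T j -` A \<inter> space M) - A)) = 0)
        \<longrightarrow> emeasure M A = 0 \<or> emeasure M (space M - A) = 0)"

end

theory Submission
  imports Defs
begin

lemma cov_distr:
  fixes M :: "'x measure" and f :: "'x \<Rightarrow> complex"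
  assumes D: "D \<in> sets M" and meas: "\<forall>A\<in>sets M. {x\<in>D. t x \<in> A} \<in> sets M"
    and tsp: "\<forall>x\<in>D. t x \<in> space M"
    and dens: "\<forall>A\<in>sets M. emeasure M {x\<in>D. t x \<in> A} = (\<integral>\<^sup>+x\<in>A. ennreal ((cmod (f x))\<^sup>2) \<partial>M)"
    and fm: "f \<in> borel_measurable M"
  shows "t \<in> measurable (restrict_space M D) M"
    and "distr (restrict_space M D) M t = density M (\<lambda>x. ennreal ((cmod (f x))\<^sup>2))"
proof -
  have Dsp: "D \<inter> space M = D" using sets.sets_into_space[OF D] by auto
  have D': "D \<inter> space M \<in> sets M" using D Dsp by simp
  show tm: "t \<in> measurable (restrict_space M D) M"
    unfolding measurable_def
  proof (intro CollectI conjI ballI)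
    show "t \<in> space (restrict_space M D) \<rightarrow> space M" using tsp by (auto simp: space_restrict_space)
  next
    fix A assume A: "A \<in> sets M"
    have "t -` A \<inter> space (restrict_space M D) = {x\<in>D. t x \<in> A}"
      using Dsp by (auto simp: space_restrict_space)
    then show "t -` A \<inter> space (restrict_space M D) \<in> sets (restrict_space M D)"
      using meas A by (auto simp: sets_restrict_space_iff[OF D'])
  qed
  show "distr (restrict_space M D) M t = density M (\<lambda>x. ennreal ((cmod (f x))\<^sup>2))"
  proof (rule measure_eqI)
    show "sets (distr (restrict_space M D) M t) = sets (density M (\<lambda>x. ennreal ((cmod (f x))\<^sup>2)))" by simp
  next
    fix A assume "A \<in> sets (distr (restrict_space M D) M t)"
    then have A: "A \<in> sets M" by simp
    have "t -` A \<inter> space (restrict_space M D) = {x\<in>D. t x \<in> A}"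
      using Dsp by (auto simp: space_restrict_space)
    then have "emeasure (distr (restrict_space M D) M t) A = emeasure M {x\<in>D. t x \<in> A}"
      using A tm by (simp add: emeasure_distr emeasure_restrict_space[OF D'])
    also have "\<dots> = (\<integral>\<^sup>+x\<in>A. ennreal ((cmod (f x))\<^sup>2) \<partial>M)" using dens A by auto
    also have "\<dots> = emeasure (density M (\<lambda>x. ennreal ((cmod (f x))\<^sup>2))) A"
      using A fm by (simp add: emeasure_density)
    finally show "emeasure (distr (restrict_space M D) M t) A = emeasure (density M (\<lambda>x. ennreal ((cmod (f x))\<^sup>2))) A" .
  qed
qed

lemma cov:
  fixes M :: "'x measure" and f :: "'x \<Rightarrow> complex" and F :: "'x \<Rightarrow> 'b::{banach, second_countable_topology}"
  assumes D: "D \<in> sets M" and meas: "\<forall>A\<in>sets M. {x\<in>D. t x \<in> A} \<in> sets M"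
    and tsp: "\<forall>x\<in>D. t x \<in> space M"
    and dens: "\<forall>A\<in>sets M. emeasure M {x\<in>D. t x \<in> A} = (\<integral>\<^sup>+x\<in>A. ennreal ((cmod (f x))\<^sup>2) \<partial>M)"
    and fm: "f \<in> borel_measurable M" and Fm: "F \<in> borel_measurable M"
  shows "integrable M (\<lambda>x. (cmod (f x))\<^sup>2 *\<^sub>R F x) \<longleftrightarrow> integrable M (\<lambda>y. indicator D y *\<^sub>R F (t y))"
    and "integral\<^sup>L M (\<lambda>x. (cmod (f x))\<^sup>2 *\<^sub>R F x) = integral\<^sup>L M (\<lambda>y. indicator D y *\<^sub>R F (t y))"
proof -
  have Dsp: "D \<inter> space M = D" using sets.sets_into_space[OF D] by auto
  have D': "D \<inter> space M \<in> sets M" using D Dsp by simp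
  note tm = cov_distr(1)[OF D meas tsp dens fm] and eq = cov_distr(2)[OF D meas tsp dens fm]
  have gm: "(\<lambda>x. (cmod (f x))\<^sup>2) \<in> borel_measurable M" using fm by measurable
  have "integrable M (\<lambda>x. (cmod (f x))\<^sup>2 *\<^sub>R F x) \<longleftrightarrow> integrable (density M (\<lambda>x. ennreal ((cmod (f x))\<^sup>2))) F"
    using integrable_density[OF Fm gm] by simp
  also have "\<dots> \<longleftrightarrow> integrable (restrict_space M D) (\<lambda>y. F (t y))"
    unfolding eq[symmetric] by (rule integrable_distr_eq[OF tm Fm])
  also have "\<dots> \<longleftrightarrow> integrable M (\<lambda>y. indicator D y *\<^sub>R F (t y))"
    by (rule integrable_restrict_space[OF D'])
  finally show "integrable M (\<lambda>x. (cmod (f x))\<^sup>2 *\<^sub>R F x) \<longleftrightarrow> integrable M (\<lambda>y. indicator D y *\<^sub>R F (t y))" .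
  have "integral\<^sup>L M (\<lambda>x. (cmod (f x))\<^sup>2 *\<^sub>R F x) = integral\<^sup>L (density M (\<lambda>x. ennreal ((cmod (f x))\<^sup>2))) F"
    using integral_density[OF Fm gm] by simp
  also have "\<dots> = integral\<^sup>L (restrict_space M D) (\<lambda>y. F (t y))"
    unfolding eq[symmetric] by (rule integral_distr[OF tm Fm])
  also have "\<dots> = integral\<^sup>L M (\<lambda>y. indicator D y *\<^sub>R F (t y))"
    by (rule integral_restrict_space[OF D'])
  finally show "integral\<^sup>L M (\<lambda>x. (cmod (f x))\<^sup>2 *\<^sub>R F x) = integral\<^sup>L M (\<lambda>y. indicator D y *\<^sub>R F (t y))" .
qed


lemma sq_bound:
  fixes z w :: complex
  shows "(cmod (z + w))\<^sup>2 \<le> 2*(cmod z)\<^sup>2 + 2*(cmod w)\<^sup>2"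
proof -
  have "cmod (z+w) \<le> cmod z + cmod w" by (rule norm_triangle_ineq)
  then have "(cmod (z+w))\<^sup>2 \<le> (cmod z + cmod w)\<^sup>2" by (simp add: power_mono)
  moreover have "0 \<le> (cmod z - cmod w)\<^sup>2" by simp
  ultimately show ?thesis by (simp add: power2_diff power2_sum)
qed

lemma L2_lin:
  assumes g: "g \<in> L2 M" and h: "h \<in> L2 M"
  shows "(\<lambda>x. a * g x + b * h x) \<in> L2 M"
proof -
  have [measurable]: "g \<in> borel_measurable M" "h \<in> borel_measurable M" using g h by (auto simp: L2_def)
  have ig: "integrable M (\<lambda>x. (cmod (g x))\<^sup>2)" "integrable M (\<lambda>x. (cmod (h x))\<^sup>2)" using g h by (auto simp: L2_def)
  have "integrable M (\<lambda>x. 2 * (cmod a)\<^sup>2 * (cmod (g x))\<^sup>2 + 2 * (cmod b)\<^sup>2 * (cmod (h x))\<^sup>2)"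
    using Bochner_Integration.integrable_add[OF integrable_mult_right[OF ig(1), where c="2 * (cmod a)\<^sup>2"] integrable_mult_right[OF ig(2), where c="2 * (cmod b)\<^sup>2"]] by simp
  moreover have "(\<lambda>x. (cmod (a * g x + b * h x))\<^sup>2) \<in> borel_measurable M" by measurable
  moreover have "AE x in M. norm ((cmod (a * g x + b * h x))\<^sup>2) \<le> norm (2 * (cmod a)\<^sup>2 * (cmod (g x))\<^sup>2 + 2 * (cmod b)\<^sup>2 * (cmod (h x))\<^sup>2)"
  proof (intro AE_I2)
    fix x
    have "(cmod (a * g x + b * h x))\<^sup>2 \<le> 2*(cmod (a * g x))\<^sup>2 + 2*(cmod (b * h x))\<^sup>2" by (rule sq_bound)
    then show "norm ((cmod (a * g x + b * h x))\<^sup>2) \<le> norm (2 * (cmod a)\<^sup>2 * (cmod (g x))\<^sup>2 + 2 * (cmod b)\<^sup>2 * (cmod (h x))\<^sup>2)"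
      by (simp add: norm_mult power_mult_distrib)
  qed
  ultimately have "integrable M (\<lambda>x. (cmod (a * g x + b * h x))\<^sup>2)" by (rule Bochner_Integration.integrable_bound)
  then show ?thesis unfolding L2_def by simp
qed

lemma null_pre:
  fixes f :: "'x \<Rightarrow> complex"
  assumes dens: "\<forall>A\<in>sets M. emeasure M {x\<in>D. t x \<in> A} = (\<integral>\<^sup>+x\<in>A. ennreal ((cmod (f x))\<^sup>2) \<partial>M)"
    and B: "B \<in> sets M" and z: "emeasure M B = 0"
  shows "emeasure M {x\<in>D. t x \<in> B} = 0"
proof -
  have "AE x in M. x \<notin> B" using B z by (intro AE_not_in) (simp add: null_sets_def)
  then have "(\<integral>\<^sup>+x\<in>B. ennreal ((cmod (f x))\<^sup>2) \<partial>M) = (\<integral>\<^sup>+x. 0 \<partial>M)"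
    by (rule nn_integral_cong_AE[OF AE_mp]) (auto intro!: AE_I2)
  then show ?thesis using dens B by simp
qed

lemma f_vanish:
  fixes f :: "'x \<Rightarrow> complex"
  assumes dens: "\<forall>A\<in>sets M. emeasure M {x\<in>D. t x \<in> A} = (\<integral>\<^sup>+x\<in>A. ennreal ((cmod (f x))\<^sup>2) \<partial>M)"
    and fm: "f \<in> borel_measurable M" and B: "B \<in> sets M" and z: "emeasure M {x\<in>D. t x \<in> B} = 0"
  shows "AE x in M. x \<in> B \<longrightarrow> f x = 0"
proof -
  have [measurable]: "f \<in> borel_measurable M" "B \<in> sets M" using fm B by auto
  have "(\<integral>\<^sup>+x. ennreal ((cmod (f x))\<^sup>2) * indicator B x \<partial>M) = 0" using dens B z by simp
  then have "AE x in M. ennreal ((cmod (f x))\<^sup>2) * indicator B x = 0"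
    by (subst (asm) nn_integral_0_iff_AE) auto
  then show ?thesis by (rule AE_mp) (auto intro!: AE_I2 split: split_indicator)
qed


lemma facts_l:
  assumes kg: "kgraph k L r s c d" and ps: "lambda_projective_system k L r s c d M D tau tauc f"
    and l: "l \<in> L"
  shows "D l \<in> sets M" "\<forall>A\<in>sets M. {x\<in>D l. tau l x \<in> A} \<in> sets M"
    "\<forall>x\<in>D l. tau l x \<in> space M" "\<forall>x\<in>D l. tauc (d l) (tau l x) = x"
    "tauc (d l) \<in> measurable M M" "f l \<in> L2 M"
    "\<forall>A\<in>sets M. emeasure M {x\<in>D l. tau l x \<in> A} = (\<integral>\<^sup>+x\<in>A. ennreal ((cmod (f l x))\<^sup>2) \<partial>M)"
    "d l \<in> Nk k"
proof -
  show dl: "d l \<in> Nk k"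
    by (rule bspec[OF kg[unfolded kgraph_def, THEN conjunct2, THEN conjunct1] l, THEN conjunct2, THEN conjunct2])
  have sb: "sbfs M {l'\<in>L. d l' = d l} D tau (tauc (d l))"
    by (rule bspec[OF ps[unfolded lambda_projective_system_def, THEN conjunct1, unfolded lambda_sbfs_def, THEN conjunct1] dl])
  have li: "l \<in> {l'\<in>L. d l' = d l}" using l by simp
  note sbf = sb[unfolded sbfs_def]
  note X = bspec[OF conjunct1[OF sbf] li]
  show "D l \<in> sets M" by (rule X[THEN conjunct1])
  show "\<forall>A\<in>sets M. {x\<in>D l. tau l x \<in> A} \<in> sets M"
    by (rule X[THEN conjunct2, THEN conjunct2, THEN conjunct2, THEN conjunct2, THEN conjunct1])
  show "\<forall>x\<in>D l. tau l x \<in> space M"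
    by (rule X[THEN conjunct2, THEN conjunct2, THEN conjunct2, THEN conjunct1])
  show "\<forall>x\<in>D l. tauc (d l) (tau l x) = x"
    by (rule X[THEN conjunct2, THEN conjunct2, THEN conjunct2, THEN conjunct2, THEN conjunct2,
          THEN conjunct2, THEN conjunct2, THEN conjunct2])
  show "tauc (d l) \<in> measurable M M"
    by (rule sbf[THEN conjunct2, THEN conjunct2, THEN conjunct2])
  note Y = bspec[OF ps[unfolded lambda_projective_system_def, THEN conjunct2, THEN conjunct1] l]
  show "f l \<in> L2 M" by (rule Y[THEN conjunct1])
  show "\<forall>A\<in>sets M. emeasure M {x\<in>D l. tau l x \<in> A} = (\<integral>\<^sup>+x\<in>A. ennreal ((cmod (f l x))\<^sup>2) \<partial>M)"
    by (rule Y[THEN conjunct2, THEN conjunct2])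
qed

lemma cover:
  assumes kg: "kgraph k L r s c d" and ps: "lambda_projective_system k L r s c d M D tau tauc f"
    and B: "B \<in> sets M" and nz: "emeasure M B \<noteq> 0"
  shows "\<exists>B'\<in>sets M. B' \<subseteq> B \<and> 0 < emeasure M B' \<and> emeasure M B' < \<infinity>"
proof (rule ccontr)
  assume neg: "\<not> ?thesis"
  define m0 :: "nat \<Rightarrow> nat" where "m0 = (\<lambda>_. 0)"
  have m0: "m0 \<in> Nk k" by (simp add: m0_def Nk_def)
  define I where "I = {l\<in>L. d l = m0}"
  have sb: "sbfs M I D tau (tauc m0)"
    unfolding I_def
    by (rule bspec[OF ps[unfolded lambda_projective_system_def, THEN conjunct1, unfolded lambda_sbfs_def, THEN conjunct1] m0])
  have "countable L" using kg unfolding kgraph_def by (rule conjunct1)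
  then have cI: "countable I" unfolding I_def by (rule countable_subset[rotated]) auto
  have R: "\<forall>i\<in>I. tau i ` D i \<in> sets M \<and> emeasure M (tau i ` D i) < \<infinity>"
    and cov0: "emeasure M (space M - (\<Union>i\<in>I. tau i ` D i)) = 0"
    using sb unfolding sbfs_def by auto
  have z: "emeasure M (B \<inter> tau i ` D i) = 0" if i: "i \<in> I" for i
  proof -
    have "B \<inter> tau i ` D i \<in> sets M" using R i B by auto
    moreover have "emeasure M (B \<inter> tau i ` D i) \<le> emeasure M (tau i ` D i)"
      using R i by (intro emeasure_mono) auto
    ultimately show ?thesis using neg R i
      by (metis inf_le1 not_gr_zero order_le_less_trans)
  qed
  have n1: "(\<Union>i\<in>I. B \<inter> tau i ` D i) \<in> null_sets M"
    using cI z R B by (intro null_sets_UN') (auto simp: null_sets_def)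
  have n2: "space M - (\<Union>i\<in>I. tau i ` D i) \<in> null_sets M"
    using cov0 R cI by (auto simp: null_sets_def intro!: sets.countable_UN'')
  have "B \<subseteq> (\<Union>i\<in>I. B \<inter> tau i ` D i) \<union> (space M - (\<Union>i\<in>I. tau i ` D i))"
    using sets.sets_into_space[OF B] by auto
  then have "B \<in> null_sets M" using n1 n2 B null_sets_subset null_sets.Un by metis
  then show False using nz by (simp add: null_sets_def)
qed


lemma inv_step:
  fixes fl :: "'x \<Rightarrow> complex" and g :: "'x \<Rightarrow> complex" and M :: "'x measure"
  assumes D: "D \<in> sets M" and meas: "\<forall>A\<in>sets M. {x\<in>D. t x \<in> A} \<in> sets M"
    and tsp: "\<forall>x\<in>D. t x \<in> space M" and bk: "\<forall>x\<in>D. tc (t x) = x"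
    and tcm: "tc \<in> measurable M M" and fl: "fl \<in> L2 M"
    and dens: "\<forall>A\<in>sets M. emeasure M {x\<in>D. t x \<in> A} = (\<integral>\<^sup>+x\<in>A. ennreal ((cmod (fl x))\<^sup>2) \<partial>M)"
    and A: "A \<in> sets M"
    and S0: "emeasure M ((A - (tc -` A \<inter> space M)) \<union> ((tc -` A \<inter> space M) - A)) = 0"
    and g: "g \<in> L2 M" and gA: "AE x in M. x \<notin> A \<longrightarrow> g x = 0"
  shows "(\<lambda>x. fl x * g (tc x)) \<in> L2 M"
    and "AE x in M. x \<notin> A \<longrightarrow> fl x * g (tc x) = 0"
    and "\<exists>h. h \<in> L2 M \<and> (AE x in M. x \<notin> A \<longrightarrow> h x = 0) \<and>
           (\<forall>u\<in>L2 M. l2_inner M (\<lambda>x. fl x * u (tc x)) g = l2_inner M u h)"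
proof -
  have flm[measurable]: "fl \<in> borel_measurable M" using fl by (simp add: L2_def)
  have gm[measurable]: "g \<in> borel_measurable M" using g by (simp add: L2_def)
  have tcm'[measurable]: "tc \<in> measurable M M" by (rule tcm)
  have Am[measurable]: "A \<in> sets M" by (rule A)
  have Dm[measurable]: "D \<in> sets M" by (rule D)
  have Dsp: "D \<inter> space M = D" using sets.sets_into_space[OF D] by auto
  have D': "D \<inter> space M \<in> sets M" using D Dsp by simp
  note tm = cov_distr(1)[OF D meas tsp dens flm]
  define S where "S = (A - (tc -` A \<inter> space M)) \<union> ((tc -` A \<inter> space M) - A)"
  have Sm: "S \<in> sets M" unfolding S_def by measurable
  have S0': "emeasure M S = 0" using S0 by (simp add: S_def)
  have aeS: "AE x in M. x \<notin> S" using Sm S0' by (intro AE_not_in) (simp add: null_sets_def)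
  obtain N where N: "{x\<in>space M. \<not> (x \<notin> A \<longrightarrow> g x = 0)} \<subseteq> N" "emeasure M N = 0" "N \<in> sets M"
    using gA by (rule AE_E)
  have "integrable M (\<lambda>y. indicator D y *\<^sub>R (cmod (g y))\<^sup>2)"
    using g D by (intro integrable_mult_indicator) (auto simp: L2_def)
  moreover have "(\<lambda>y. indicator D y *\<^sub>R (cmod (g y))\<^sup>2) = (\<lambda>y. indicator D y *\<^sub>R (cmod (g (tc (t y))))\<^sup>2)"
    using bk by (auto simp: indicator_def)
  ultimately have "integrable M (\<lambda>x. (cmod (fl x))\<^sup>2 *\<^sub>R (cmod (g (tc x)))\<^sup>2)"
    using cov(1)[OF D meas tsp dens flm, of "\<lambda>x. (cmod (g (tc x)))\<^sup>2"] by simp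
  then show "(\<lambda>x. fl x * g (tc x)) \<in> L2 M"
    unfolding L2_def by (simp add: norm_mult power_mult_distrib)
  define E2 where "E2 = tc -` N \<inter> space M"
  have E2m: "E2 \<in> sets M" unfolding E2_def using N(3) by measurable
  have "{y\<in>D. t y \<in> E2} \<subseteq> N" using bk tsp by (auto simp: E2_def)
  then have "emeasure M {y\<in>D. t y \<in> E2} \<le> emeasure M N"
    using N(3) by (intro emeasure_mono) auto
  then have "emeasure M {y\<in>D. t y \<in> E2} = 0" using N(2) by simp
  then have aeE: "AE x in M. x \<in> E2 \<longrightarrow> fl x = 0" by (rule f_vanish[OF dens flm E2m])
  show "AE x in M. x \<notin> A \<longrightarrow> fl x * g (tc x) = 0"
    using aeS aeE AE_space
  proof eventually_elim
    case (elim x)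
    show ?case
    proof
      assume xA: "x \<notin> A"
      have tcx: "tc x \<in> space M" using measurable_space[OF tcm] elim by auto
      have "tc x \<notin> A" using elim xA by (auto simp: S_def)
      show "fl x * g (tc x) = 0"
      proof (cases "tc x \<in> N")
        case True then show ?thesis using elim by (auto simp: E2_def)
      next
        case False then show ?thesis using N(1) tcx \<open>tc x \<notin> A\<close> by auto
      qed
    qed
  qed
  define H where "H = (\<lambda>x. g x / fl x)"
  have Hm[measurable]: "H \<in> borel_measurable M" unfolding H_def by measurable
  define h where "h = (\<lambda>y. indicator D y *\<^sub>R H (t y))"
  have "(\<lambda>y. H (t y)) \<in> borel_measurable (restrict_space M D)"
    using tm Hm by (rule measurable_compose)
  then have hm: "h \<in> borel_measurable M"
    unfolding h_def using borel_measurable_restrict_space_iff[OF D', of "\<lambda>y. H (t y)"] by blast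
  have "integrable M (\<lambda>x. (cmod (fl x))\<^sup>2 *\<^sub>R (cmod (H x))\<^sup>2)"
  proof (rule Bochner_Integration.integrable_bound)
    show "integrable M (\<lambda>x. (cmod (g x))\<^sup>2)" using g by (simp add: L2_def)
    show "(\<lambda>x. (cmod (fl x))\<^sup>2 *\<^sub>R (cmod (H x))\<^sup>2) \<in> borel_measurable M" by measurable
    show "AE x in M. norm ((cmod (fl x))\<^sup>2 *\<^sub>R (cmod (H x))\<^sup>2) \<le> norm ((cmod (g x))\<^sup>2)"
    proof (intro AE_I2)
      fix x
      show "norm ((cmod (fl x))\<^sup>2 *\<^sub>R (cmod (H x))\<^sup>2) \<le> norm ((cmod (g x))\<^sup>2)"
        by (cases "fl x = 0") (simp_all add: H_def norm_divide power_divide)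
    qed
  qed
  then have "integrable M (\<lambda>y. indicator D y *\<^sub>R (cmod (H (t y)))\<^sup>2)"
    using cov(1)[OF D meas tsp dens flm, of "\<lambda>x. (cmod (H x))\<^sup>2"] by simp
  moreover have "(\<lambda>y. indicator D y *\<^sub>R (cmod (H (t y)))\<^sup>2) = (\<lambda>y. (cmod (h y))\<^sup>2)"
    by (auto simp: h_def indicator_def)
  ultimately have hL2: "h \<in> L2 M" using hm by (simp add: L2_def)
  define Z where "Z = {y\<in>D. t y \<in> N \<union> S}"
  have "emeasure M Z = 0" unfolding Z_def
  proof (rule null_pre[OF dens])
    show "N \<union> S \<in> sets M" using N(3) Sm by auto
    have "emeasure M (N \<union> S) \<le> emeasure M N + emeasure M S"
      using N(3) Sm by (rule emeasure_subadditive)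
    then show "emeasure M (N \<union> S) = 0" using N(2) S0' by simp
  qed
  moreover have "Z \<in> sets M" unfolding Z_def using bspec[OF meas, of "N \<union> S"] N(3) Sm by blast
  ultimately have aeZ: "AE x in M. x \<notin> Z" by (intro AE_not_in) (simp add: null_sets_def)
  have hA: "AE x in M. x \<notin> A \<longrightarrow> h x = 0"
    using aeZ AE_space
  proof eventually_elim
    case (elim y)
    show ?case
    proof (rule ccontr)
      assume "\<not> (y \<notin> A \<longrightarrow> h y = 0)"
      then have yA: "y \<notin> A" and hy: "h y \<noteq> 0" by auto
      then have yD: "y \<in> D" by (auto simp: h_def indicator_def split: if_splits)
      then have gt: "g (t y) \<noteq> 0" using hy by (auto simp: h_def H_def)
      have tys: "t y \<in> space M" using tsp yD by auto
      have "t y \<notin> N \<and> t y \<notin> S" using elim yD by (auto simp: Z_def)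
      then have "t y \<in> A" using N(1) tys gt by auto
      moreover have "tc (t y) \<notin> A" using bk yD yA by auto
      ultimately have "t y \<in> S" using tys by (auto simp: S_def)
      then show False using \<open>t y \<notin> N \<and> t y \<notin> S\<close> by simp
    qed
  qed
  have ident: "l2_inner M (\<lambda>x. fl x * u (tc x)) g = l2_inner M u h" if u: "u \<in> L2 M" for u
  proof -
    have um[measurable]: "u \<in> borel_measurable M" using u by (simp add: L2_def)
    have "l2_inner M u h = integral\<^sup>L M (\<lambda>y. indicator D y *\<^sub>R (u (tc (t y)) * cnj (H (t y))))"
      unfolding l2_inner_def h_def
      by (rule Bochner_Integration.integral_cong) (auto simp: indicator_def bk)
    also have "\<dots> = integral\<^sup>L M (\<lambda>x. (cmod (fl x))\<^sup>2 *\<^sub>R (u (tc x) * cnj (H x)))"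
    proof -
      have "(\<lambda>z. cnj z) \<in> borel_measurable borel"
        by (intro borel_measurable_continuous_onI continuous_on_cnj continuous_on_id)
      then have [measurable]: "(\<lambda>x. cnj (H x)) \<in> borel_measurable M"
        using Hm by (rule measurable_compose[rotated])
      have Fm: "(\<lambda>x. u (tc x) * cnj (H x)) \<in> borel_measurable M" by measurable
      show ?thesis by (rule cov(2)[OF D meas tsp dens flm Fm, symmetric])
    qed
    also have "\<dots> = integral\<^sup>L M (\<lambda>x. fl x * u (tc x) * cnj (g x))"
    proof (rule Bochner_Integration.integral_cong)
      fix x
      show "(cmod (fl x))\<^sup>2 *\<^sub>R (u (tc x) * cnj (H x)) = fl x * u (tc x) * cnj (g x)"
      proof (cases "fl x = 0")
        case True then show ?thesis by simp
      next
        case False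
        then have "cnj (fl x) \<noteq> 0" by simp
        moreover have "complex_of_real ((cmod (fl x))\<^sup>2) = fl x * cnj (fl x)"
          by (rule complex_norm_square)
        ultimately show ?thesis
          by (simp add: scaleR_conv_of_real H_def field_simps)
      qed
    qed simp
    finally show ?thesis unfolding l2_inner_def by simp
  qed
  show "\<exists>h. h \<in> L2 M \<and> (AE x in M. x \<notin> A \<longrightarrow> h x = 0) \<and>
           (\<forall>u\<in>L2 M. l2_inner M (\<lambda>x. fl x * u (tc x)) g = l2_inner M u h)"
    using hL2 hA ident by blast
qed


lemma closed_V:
  fixes M :: "'x measure"
  assumes A: "A \<in> sets M"
  shows "l2_closed_subspace M {g \<in> L2 M. AE x in M. x \<notin> A \<longrightarrow> g x = 0}"
  unfolding l2_closed_subspace_def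
proof (intro conjI allI ballI impI)
  show "{g \<in> L2 M. AE x in M. x \<notin> A \<longrightarrow> g x = 0} \<subseteq> L2 M" by auto
  show "(\<lambda>x. 0) \<in> {g \<in> L2 M. AE x in M. x \<notin> A \<longrightarrow> g x = 0}" by (simp add: L2_def)
next
  fix g h assume g: "g \<in> {g \<in> L2 M. AE x in M. x \<notin> A \<longrightarrow> g x = 0}"
    and h: "h \<in> {g \<in> L2 M. AE x in M. x \<notin> A \<longrightarrow> g x = 0}"
  have "(\<lambda>x. 1 * g x + 1 * h x) \<in> L2 M" using g h by (intro L2_lin) auto
  moreover have "AE x in M. x \<notin> A \<longrightarrow> g x + h x = 0"
  proof -
    have ag: "AE x in M. x \<notin> A \<longrightarrow> g x = 0" and ah: "AE x in M. x \<notin> A \<longrightarrow> h x = 0"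
      using g h by auto
    from ag ah show ?thesis by eventually_elim auto
  qed
  ultimately show "(\<lambda>x. g x + h x) \<in> {g \<in> L2 M. AE x in M. x \<notin> A \<longrightarrow> g x = 0}" by simp
next
  fix a :: complex and g assume g: "g \<in> {g \<in> L2 M. AE x in M. x \<notin> A \<longrightarrow> g x = 0}"
  have "(\<lambda>x. a * g x + 0 * g x) \<in> L2 M" using g by (intro L2_lin) auto
  moreover have "AE x in M. x \<notin> A \<longrightarrow> a * g x = 0"
  proof -
    have ag: "AE x in M. x \<notin> A \<longrightarrow> g x = 0" using g by auto
    from ag show ?thesis by eventually_elim auto
  qed
  ultimately show "(\<lambda>x. a * g x) \<in> {g \<in> L2 M. AE x in M. x \<notin> A \<longrightarrow> g x = 0}" by simp
next
  fix gs g assume H: "(\<forall>n. gs n \<in> {g \<in> L2 M. AE x in M. x \<notin> A \<longrightarrow> g x = 0}) \<and> g \<in> L2 M \<and>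
     (\<lambda>n. l2_norm M (\<lambda>x. gs n x - g x)) \<longlonglongrightarrow> 0"
  then have gsV: "\<And>n. gs n \<in> L2 M" "\<And>n. AE x in M. x \<notin> A \<longrightarrow> gs n x = 0"
    and gL2: "g \<in> L2 M" and lim: "(\<lambda>n. l2_norm M (\<lambda>x. gs n x - g x)) \<longlonglongrightarrow> 0" by auto
  have ig: "integrable M (\<lambda>x. (cmod (g x))\<^sup>2)" using gL2 by (simp add: L2_def)
  have CA: "space M - A \<in> sets M" using A by auto
  define I where "I = integral\<^sup>L M (\<lambda>x. (cmod (g x))\<^sup>2 * indicator (space M - A) x)"
  have intI: "integrable M (\<lambda>x. (cmod (g x))\<^sup>2 * indicator (space M - A) x)"
    by (rule integrable_real_mult_indicator[OF CA ig])
  have le: "I \<le> (l2_norm M (\<lambda>x. gs n x - g x))\<^sup>2" for n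
  proof -
    have "(\<lambda>x. 1 * gs n x + (-1) * g x) \<in> L2 M" using gsV(1) gL2 by (rule L2_lin)
    moreover have "(\<lambda>x. 1 * gs n x + (-1) * g x) = (\<lambda>x. gs n x - g x)" by auto
    ultimately have "(\<lambda>x. gs n x - g x) \<in> L2 M" by simp
    then have id: "integrable M (\<lambda>x. (cmod (gs n x - g x))\<^sup>2)" by (simp add: L2_def)
    have "(l2_norm M (\<lambda>x. gs n x - g x))\<^sup>2 = integral\<^sup>L M (\<lambda>x. (cmod (gs n x - g x))\<^sup>2)"
      unfolding l2_norm_def by (simp add: integral_nonneg_AE)
    moreover have "I \<le> integral\<^sup>L M (\<lambda>x. (cmod (gs n x - g x))\<^sup>2)"
      unfolding I_def
    proof (rule integral_mono_AE[OF intI id])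
      show "AE x in M. (cmod (g x))\<^sup>2 * indicator (space M - A) x \<le> (cmod (gs n x - g x))\<^sup>2"
        using gsV(2)[of n] AE_space
      proof eventually_elim
        case (elim x)
        show ?case
        proof (cases "x \<in> A")
          case True then show ?thesis by simp
        next
          case False then show ?thesis using elim by (simp add: norm_minus_commute)
        qed
      qed
    qed
    ultimately show ?thesis by simp
  qed
  have "(\<lambda>n. (l2_norm M (\<lambda>x. gs n x - g x))\<^sup>2) \<longlonglongrightarrow> 0\<^sup>2"
    by (rule tendsto_power[OF lim])
  then have "I \<le> 0\<^sup>2" by (rule LIMSEQ_le_const) (use le in blast)
  then have "I \<le> 0" by simp
  moreover have "0 \<le> I" unfolding I_def by (rule integral_nonneg_AE) (auto intro!: AE_I2)
  ultimately have "I = 0" by simp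
  then have "AE x in M. (cmod (g x))\<^sup>2 * indicator (space M - A) x = 0"
    unfolding I_def by (subst (asm) integral_nonneg_eq_0_iff_AE[OF intI]) (auto intro!: AE_I2)
  then have "AE x in M. x \<notin> A \<longrightarrow> g x = 0"
    using AE_space by eventually_elim (auto simp: indicator_def)
  then show "g \<in> {g \<in> L2 M. AE x in M. x \<notin> A \<longrightarrow> g x = 0}" using gL2 by simp
qed

lemma indicator_L2:
  fixes M :: "'x measure"
  assumes B: "B \<in> sets M" "emeasure M B < \<infinity>"
  shows "(\<lambda>x. indicator B x :: complex) \<in> L2 M"
proof -
  have "(\<lambda>x. (cmod (indicator B x :: complex))\<^sup>2) = indicator B" by (auto simp: indicator_def)
  then show ?thesis unfolding L2_def using B by simp
qed

lemma ae_not_in_zero: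
  fixes M :: "'x measure"
  assumes B: "B \<in> sets M" and ae: "AE x in M. x \<notin> B"
  shows "emeasure M B = 0"
proof -
  have "{x\<in>space M. \<not> x \<notin> B} = B" using sets.sets_into_space[OF B] by auto
  then show ?thesis using AE_iff_measurable[OF B, of "\<lambda>x. x \<notin> B"] ae by simp
qed

theorem proposition4p6:
  fixes k :: nat and L :: "'a set" and r s :: "'a \<Rightarrow> 'a" and c :: "'a \<Rightarrow> 'a \<Rightarrow> 'a"
    and d :: "'a \<Rightarrow> nat \<Rightarrow> nat" and M :: "'x measure" and D :: "'a \<Rightarrow> 'x set"
    and tau :: "'a \<Rightarrow> 'x \<Rightarrow> 'x" and tauc :: "(nat \<Rightarrow> nat) \<Rightarrow> 'x \<Rightarrow> 'x"
    and f :: "'a \<Rightarrow> 'x \<Rightarrow> complex"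
  assumes "kgraph k L r s c d"
    and "row_finite k L r d"
    and "no_sources k L r d"
    and "lambda_projective_system k L r s c d M D tau tauc f"
    and "irreducible_rep M L (kg_rep f tauc d)"
  shows "jointly_ergodic M (Nk k) tauc"
  unfolding jointly_ergodic_def
proof (intro ballI impI)
  fix A assume A: "A \<in> sets M"
    and inv: "\<forall>j\<in>Nk k. emeasure M ((A - (tauc j -` A \<inter> space M)) \<union> ((tauc j -` A \<inter> space M) - A)) = 0"
  show "emeasure M A = 0 \<or> emeasure M (space M - A) = 0"
  proof (rule ccontr)
    assume "\<not> (emeasure M A = 0 \<or> emeasure M (space M - A) = 0)"
    then have nA: "emeasure M A \<noteq> 0" and nC: "emeasure M (space M - A) \<noteq> 0" by auto
    define V where "V = {g \<in> L2 M. AE x in M. x \<notin> A \<longrightarrow> g x = 0}"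
    have cs: "l2_closed_subspace M V" unfolding V_def by (rule closed_V[OF A])
    have ri: "rep_invariant M L (kg_rep f tauc d) V"
      unfolding rep_invariant_def
    proof (intro conjI ballI)
      fix l g assume l: "l \<in> L" and g: "g \<in> V"
      note F = facts_l[OF assms(1) assms(4) l]
      have S0: "emeasure M ((A - (tauc (d l) -` A \<inter> space M)) \<union> ((tauc (d l) -` A \<inter> space M) - A)) = 0"
        using inv F(8) by blast
      have gL2: "g \<in> L2 M" and gA: "AE x in M. x \<notin> A \<longrightarrow> g x = 0" using g by (auto simp: V_def)
      note IS = inv_step[OF F(1) F(2) F(3) F(4) F(5) F(6) F(7) A S0 gL2 gA]
      show "kg_rep f tauc d l g \<in> V"
        unfolding V_def kg_rep_def using IS(1) IS(2) by simp
      show "\<exists>h\<in>V. \<forall>u\<in>L2 M. l2_inner M (kg_rep f tauc d l u) g = l2_inner M u h"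
        using IS(3) unfolding V_def kg_rep_def by blast
    qed
    have "(\<forall>g\<in>V. AE x in M. g x = 0) \<or> L2 M \<subseteq> V"
      using assms(5) cs ri unfolding irreducible_rep_def by blast
    then show False
    proof
      assume all0: "\<forall>g\<in>V. AE x in M. g x = 0"
      obtain B where B: "B \<in> sets M" "B \<subseteq> A" "0 < emeasure M B" "emeasure M B < \<infinity>"
        using cover[OF assms(1) assms(4) A nA] by blast
      have "(\<lambda>x. indicator B x :: complex) \<in> V"
        unfolding V_def using indicator_L2[OF B(1) B(4)] B(2) by (auto intro!: AE_I2 simp: indicator_def)
      then have "AE x in M. (indicator B x :: complex) = 0" using all0 by blast
      then have "AE x in M. x \<notin> B" by (rule AE_mp) (auto intro!: AE_I2 simp: indicator_def)
      then have "emeasure M B = 0" by (rule ae_not_in_zero[OF B(1)])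
      then show False using B(3) by simp
    next
      assume sub: "L2 M \<subseteq> V"
      have CA: "space M - A \<in> sets M" using A by auto
      obtain B where B: "B \<in> sets M" "B \<subseteq> space M - A" "0 < emeasure M B" "emeasure M B < \<infinity>"
        using cover[OF assms(1) assms(4) CA nC] by blast
      have "(\<lambda>x. indicator B x :: complex) \<in> V" using indicator_L2[OF B(1) B(4)] sub by blast
      then have "AE x in M. x \<notin> A \<longrightarrow> (indicator B x :: complex) = 0" by (simp add: V_def)
      then have "AE x in M. x \<notin> B" by (rule AE_mp) (use B(2) in \<open>auto intro!: AE_I2 simp: indicator_def\<close>)
      then have "emeasure M B = 0" by (rule ae_not_in_zero[OF B(1)])
      then show False using B(3) by simp
    qed
  qed
qed

end
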